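(* Let $\nu \geq 0$, $\alpha > -1$ and $c > 0$. For integers $k \geq 0$ define the moments $$\mu_k = \int_0^{\infty} x^{k+\alpha} e^{-cx}\,[J_{\nu}(x)+1]\, dx, \qquad \mu_{k,0} = \int_0^{\infty} x^{k+\alpha} e^{-cx} J_{\nu}(x)\, dx .$$ Then for all $k \geq 1$, $$\mu_{k+1} = \frac{1}{c^2+1}\left\{ c\,[2(k+\alpha)+1]\,\mu_k - [(k+\alpha)^2-\nu^2]\,\mu_{k-1} + \frac{\Gamma(k+\alpha)\,[(k+\alpha)^2+(k+\alpha)-c^2\nu^2]}{c^{k+\alpha+2}} \right\},$$ with $$\mu_0 = \mu_{0,0} + \frac{\Gamma(\alpha+1)}{c^{\alpha+1}}, \qquad \mu_1 = \mu_{1,0} + \frac{\Gamma(\alpha+2)}{c^{\alpha+2}}.$$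
   Context: $J_\nu$ is the Bessel function of the first kind of order $\nu$ and $\Gamma$ the Gamma function. *)

theory Defs
  imports "HOL-Analysis.Analysis"
begin

definition BesselJ :: "real \<Rightarrow> real \<Rightarrow> real" where
  "BesselJ \<nu> x = (\<Sum>m. (-1) ^ m / (fact m * Gamma (real m + \<nu> + 1)) * (x / 2) ^ (2 * m) * (x / 2) powr \<nu>)"

end

theory Submission
  imports Defs "HOL-Real_Asymp.Real_Asymp"
begin


definition bc :: "real \<Rightarrow> nat \<Rightarrow> real" where
  "bc \<nu> m = (-1) ^ m / (fact m * Gamma (real m + \<nu> + 1))"

lemma Gamma_step: "x > 0 \<Longrightarrow> Gamma (x + 1) = x * Gamma (x::real)"
  by (rule Gamma_plus1) (auto dest: nonpos_Ints_nonpos)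

lemma bc_Suc:
  assumes "\<nu> \<ge> 0"
  shows "bc \<nu> (Suc n) * ((real n + 1) * (real n + \<nu> + 1)) = - bc \<nu> n"
proof -
  have g: "Gamma (real (Suc n) + \<nu> + 1) = (real n + \<nu> + 1) * Gamma (real n + \<nu> + 1)"
    using Gamma_step[of "real n + \<nu> + 1"] assms by (simp add: algebra_simps)
  have pos: "Gamma (real n + \<nu> + 1) > 0" using assms by simp
  have p2: "real n + \<nu> + 1 > 0" using assms by simp
  have f: "(fact (Suc n)::real) = (real n + 1) * fact n" by (simp add: fact_Suc algebra_simps)
  show ?thesis unfolding bc_def g f using pos p2
    by (simp add: divide_simps)
qed

lemma bc_summable:
  assumes "\<nu> \<ge> 0"
  shows "summable (\<lambda>n. bc \<nu> n * z ^ n)"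
proof (rule summable_ratio_test[of "1/2" "nat \<lceil>2 * \<bar>z\<bar>\<rceil>"])
  fix n assume n: "n \<ge> nat \<lceil>2 * \<bar>z\<bar>\<rceil>"
  have pd: "(real n + 1) * (real n + \<nu> + 1) > 0" using assms by (simp add: add_pos_nonneg)
  have e: "bc \<nu> (Suc n) = - bc \<nu> n / ((real n + 1) * (real n + \<nu> + 1))"
  proof -
    have "bc \<nu> (Suc n) = (bc \<nu> (Suc n) * ((real n + 1) * (real n + \<nu> + 1))) / ((real n + 1) * (real n + \<nu> + 1))"
      using pd assms by (simp add: add_pos_nonneg)
    also have "\<dots> = - bc \<nu> n / ((real n + 1) * (real n + \<nu> + 1))" using bc_Suc[OF assms, of n] by simp
    finally show ?thesis .
  qed
  have d: "(real n + 1) * (real n + \<nu> + 1) \<ge> 2 * \<bar>z\<bar>"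
  proof -
    have "real n \<ge> 2 * \<bar>z\<bar>" using n by linarith
    moreover have "(real n + 1) * (real n + \<nu> + 1) \<ge> real n + 1"
      using assms by (simp add: mult_le_cancel_left1 add_pos_nonneg)
    ultimately show ?thesis by linarith
  qed
  have pd: "(real n + 1) * (real n + \<nu> + 1) > 0" using assms by (simp add: add_pos_nonneg)
  have "norm (bc \<nu> (Suc n) * z ^ Suc n) = \<bar>bc \<nu> n * z ^ n\<bar> * (\<bar>z\<bar> / ((real n + 1) * (real n + \<nu> + 1)))"
    unfolding e using pd by (simp add: abs_mult power_abs field_simps)
  also have "\<dots> \<le> \<bar>bc \<nu> n * z ^ n\<bar> * (1/2)"
    using d pd by (intro mult_left_mono) (auto simp: field_simps)
  finally show "norm (bc \<nu> (Suc n) * z ^ Suc n) \<le> 1/2 * norm (bc \<nu> n * z ^ n)" by simp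
qed simp

definition BG :: "real \<Rightarrow> real \<Rightarrow> real" where "BG \<nu> z = (\<Sum>n. bc \<nu> n * z ^ n)"
definition BG1 :: "real \<Rightarrow> real \<Rightarrow> real" where "BG1 \<nu> z = (\<Sum>n. diffs (bc \<nu>) n * z ^ n)"
definition BG2 :: "real \<Rightarrow> real \<Rightarrow> real" where "BG2 \<nu> z = (\<Sum>n. diffs (diffs (bc \<nu>)) n * z ^ n)"

lemma bc1_summable: "\<nu> \<ge> 0 \<Longrightarrow> summable (\<lambda>n. diffs (bc \<nu>) n * z ^ n)"
  by (rule termdiff_converges_all) (rule bc_summable)

lemma bc2_summable: "\<nu> \<ge> 0 \<Longrightarrow> summable (\<lambda>n. diffs (diffs (bc \<nu>)) n * z ^ n)"
  by (rule termdiff_converges_all) (rule bc1_summable)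

lemma BG_deriv: "\<nu> \<ge> 0 \<Longrightarrow> (BG \<nu> has_field_derivative BG1 \<nu> z) (at z)"
  unfolding BG_def[abs_def] BG1_def
  by (rule termdiffs_strong_converges_everywhere) (rule bc_summable)

lemma BG1_deriv: "\<nu> \<ge> 0 \<Longrightarrow> (BG1 \<nu> has_field_derivative BG2 \<nu> z) (at z)"
  unfolding BG1_def[abs_def] BG2_def
  by (rule termdiffs_strong_converges_everywhere) (rule bc1_summable)

lemma BG_ode:
  assumes "\<nu> \<ge> 0"
  shows "z * BG2 \<nu> z + (\<nu> + 1) * BG1 \<nu> z + BG \<nu> z = 0"
proof -
  define f where "f n = real n * diffs (bc \<nu>) n * z ^ n" for n
  have "(\<lambda>n. diffs (diffs (bc \<nu>)) n * z ^ n * z) sums (BG2 \<nu> z * z)"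
    unfolding BG2_def by (rule sums_mult2) (rule summable_sums[OF bc2_summable[OF assms]])
  moreover have "(\<lambda>n. f (Suc n)) = (\<lambda>n. diffs (diffs (bc \<nu>)) n * z ^ n * z)"
    by (auto simp: f_def diffs_def algebra_simps)
  ultimately have "(\<lambda>n. f (Suc n)) sums (BG2 \<nu> z * z)" by simp
  hence s1: "f sums (z * BG2 \<nu> z)" by (subst (asm) sums_Suc_iff) (simp add: f_def mult.commute)
  have s2: "(\<lambda>n. (\<nu> + 1) * (diffs (bc \<nu>) n * z ^ n)) sums ((\<nu> + 1) * BG1 \<nu> z)"
    unfolding BG1_def by (rule sums_mult) (rule summable_sums[OF bc1_summable[OF assms]])
  have s3: "(\<lambda>n. bc \<nu> n * z ^ n) sums (BG \<nu> z)"
    unfolding BG_def by (rule summable_sums[OF bc_summable[OF assms]])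
  have "(\<lambda>n. f n + (\<nu> + 1) * (diffs (bc \<nu>) n * z ^ n) + bc \<nu> n * z ^ n) sums
        (z * BG2 \<nu> z + (\<nu> + 1) * BG1 \<nu> z + BG \<nu> z)"
    by (intro sums_add s1 s2 s3)
  moreover have "(\<lambda>n. f n + (\<nu> + 1) * (diffs (bc \<nu>) n * z ^ n) + bc \<nu> n * z ^ n) = (\<lambda>n. 0)"
  proof
    fix n
    have "f n + (\<nu> + 1) * (diffs (bc \<nu>) n * z ^ n) + bc \<nu> n * z ^ n
        = (bc \<nu> (Suc n) * ((real n + 1) * (real n + \<nu> + 1)) + bc \<nu> n) * z ^ n"
      by (simp add: f_def diffs_def algebra_simps)
    also have "\<dots> = 0" using bc_Suc[OF assms, of n] by simp
    finally show "f n + (\<nu> + 1) * (diffs (bc \<nu>) n * z ^ n) + bc \<nu> n * z ^ n = 0" .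
  qed
  ultimately show ?thesis using sums_unique2 sums_zero by metis
qed

definition gg :: "real \<Rightarrow> real \<Rightarrow> real" where "gg \<nu> x = BG \<nu> (x^2/4)"
definition gg1 :: "real \<Rightarrow> real \<Rightarrow> real" where "gg1 \<nu> x = BG1 \<nu> (x^2/4) * (x/2)"
definition gg2 :: "real \<Rightarrow> real \<Rightarrow> real" where
  "gg2 \<nu> x = BG2 \<nu> (x^2/4) * (x/2) * (x/2) + BG1 \<nu> (x^2/4) / 2"

lemma gg_deriv:
  assumes "\<nu> \<ge> 0"
  shows "(gg \<nu> has_real_derivative gg1 \<nu> x) (at x)"
proof -
  have "((\<lambda>x. BG \<nu> (x^2/4)) has_real_derivative BG1 \<nu> (x^2/4) * (2 * x / 4)) (at x)"
    by (rule DERIV_chain2[OF BG_deriv[OF assms]]) (auto intro!: derivative_eq_intros)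
  thus ?thesis unfolding gg_def[abs_def] gg1_def by simp
qed

lemma gg1_deriv:
  assumes "\<nu> \<ge> 0"
  shows "(gg1 \<nu> has_real_derivative gg2 \<nu> x) (at x)"
proof -
  have "((\<lambda>x. BG1 \<nu> (x^2/4)) has_real_derivative BG2 \<nu> (x^2/4) * (2 * x / 4)) (at x)"
    by (rule DERIV_chain2[OF BG1_deriv[OF assms]]) (auto intro!: derivative_eq_intros)
  hence "((\<lambda>x. BG1 \<nu> (x^2/4) * (x/2)) has_real_derivative
          BG2 \<nu> (x^2/4) * (2 * x / 4) * (x/2) + BG1 \<nu> (x^2/4) * (1/2)) (at x)"
    by (auto intro!: derivative_eq_intros)
  thus ?thesis unfolding gg1_def[abs_def] gg2_def by (simp add: algebra_simps)
qed

lemma gg_ode: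
  assumes "\<nu> \<ge> 0"
  shows "x * gg2 \<nu> x + (2 * \<nu> + 1) * gg1 \<nu> x + x * gg \<nu> x = 0"
proof -
  have "x * gg2 \<nu> x + (2 * \<nu> + 1) * gg1 \<nu> x + x * gg \<nu> x =
        x * ((x^2/4) * BG2 \<nu> (x^2/4) + (\<nu> + 1) * BG1 \<nu> (x^2/4) + BG \<nu> (x^2/4))"
    unfolding gg_def gg1_def gg2_def by (simp add: field_simps power2_eq_square)
  also have "\<dots> = 0" using BG_ode[OF assms, of "x^2/4"] by simp
  finally show ?thesis .
qed

lemma gg_bound:
  assumes "\<nu> \<ge> 0" "x \<ge> 0"
  shows "(gg \<nu> x)^2 + (gg1 \<nu> x)^2 \<le> (bc \<nu> 0)^2"
proof -
  define E where "E x = (gg \<nu> x)^2 + (gg1 \<nu> x)^2" for x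
  have dE: "(E has_real_derivative 2 * gg1 \<nu> x * (gg \<nu> x + gg2 \<nu> x)) (at x)" for x
  proof -
    have "(E has_real_derivative 2 * gg \<nu> x * gg1 \<nu> x + 2 * gg1 \<nu> x * gg2 \<nu> x) (at x)"
      unfolding E_def[abs_def]
      by (auto intro!: derivative_eq_intros gg_deriv[OF assms(1)] gg1_deriv[OF assms(1)])
    thus ?thesis by (simp add: algebra_simps)
  qed
  have E0: "E 0 = (bc \<nu> 0)^2"
    unfolding E_def gg_def gg1_def BG_def using powser_zero[of "bc \<nu>"] by simp
  have "E x \<le> E 0"
  proof (rule DERIV_nonpos_imp_decreasing_open[OF assms(2)])
    fix y :: real assume y: "0 < y" "y < x"
    have "y * gg2 \<nu> y = - (2 * \<nu> + 1) * gg1 \<nu> y - y * gg \<nu> y"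
      using gg_ode[OF assms(1), of y] by linarith
    hence "gg \<nu> y + gg2 \<nu> y = - (2 * \<nu> + 1) * gg1 \<nu> y / y"
      using y by (simp add: field_simps)
    hence "2 * gg1 \<nu> y * (gg \<nu> y + gg2 \<nu> y) = - 2 * (2 * \<nu> + 1) * (gg1 \<nu> y)^2 / y"
      by (simp add: power2_eq_square)
    also have "\<dots> \<le> 0" using y assms
      by (intro divide_nonpos_pos mult_nonpos_nonneg) auto
    finally show "\<exists>d. (E has_real_derivative d) (at y) \<and> d \<le> 0" using dE by blast
  next
    show "continuous_on {0..x} E"
      using dE by (meson DERIV_isCont continuous_at_imp_continuous_on)
  qed
  thus ?thesis using E0 by (simp add: E_def)
qed

lemma BesselJ_eq:
  assumes "\<nu> \<ge> 0"
  shows "BesselJ \<nu> x = (x/2) powr \<nu> * gg \<nu> x"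
proof -
  have "BesselJ \<nu> x = (\<Sum>m. bc \<nu> m * (x^2/4) ^ m * (x/2) powr \<nu>)"
    unfolding BesselJ_def bc_def by (simp add: power_mult power_divide power2_eq_square)
  also have "\<dots> = (\<Sum>m. bc \<nu> m * (x^2/4) ^ m) * (x/2) powr \<nu>"
    by (rule suminf_mult2[symmetric]) (rule bc_summable[OF assms])
  finally show ?thesis unfolding gg_def BG_def by simp
qed

lemma gamma_int:
  fixes s c :: real
  assumes "s > 0" "c > 0"
  shows "has_bochner_integral lborel (\<lambda>x. indicator {0<..} x *\<^sub>R (x powr (s-1) * exp(-c*x))) (Gamma s / c powr s)"
proof -
  define f where "f t = indicator {0..} t * t powr (s-1) / exp t" for t :: real
  have fm: "f \<in> borel_measurable lborel" unfolding f_def by measurable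
  have h1: "has_bochner_integral lborel f (Gamma s)"
  proof (rule has_bochner_integral_nn_integral[OF fm])
    show "AE x in lborel. 0 \<le> f x" by (auto simp: f_def indicator_def)
    show "0 \<le> Gamma s" using assms by simp
    show "(\<integral>\<^sup>+ x. ennreal (f x) \<partial>lborel) = ennreal (Gamma s)"
      using Gamma_conv_nn_integral_real[OF assms(1)] by (simp add: f_def)
  qed
  hence h2: "has_bochner_integral lborel (\<lambda>x. f (0 + c * x)) (Gamma s /\<^sub>R \<bar>c\<bar>)"
    using lborel_has_bochner_integral_real_affine_iff[of c f "Gamma s" 0] assms by simp
  hence h3: "has_bochner_integral lborel (\<lambda>x. (1 / c powr (s-1)) * f (0 + c * x)) ((1 / c powr (s-1)) * (Gamma s /\<^sub>R \<bar>c\<bar>))"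
    by (rule has_bochner_integral_mult_right)
  have e1: "(1 / c powr (s-1)) * f (0 + c * x) = indicator {0<..} x *\<^sub>R (x powr (s-1) * exp(-c*x))" for x
  proof (cases "x > 0")
    case True
    then show ?thesis using assms
      by (simp add: f_def powr_mult exp_minus field_simps)
  next
    case False
    then show ?thesis using assms
      by (auto simp: f_def indicator_def zero_le_mult_iff)
  qed
  have e2: "(1 / c powr (s-1)) * (Gamma s /\<^sub>R \<bar>c\<bar>) = Gamma s / c powr s"
    using assms by (simp add: powr_diff field_simps)
  show ?thesis using h3 unfolding e1 e2 .
qed

lemma gg_cont: "\<nu> \<ge> 0 \<Longrightarrow> isCont (gg \<nu>) x"
  using gg_deriv DERIV_isCont by blast

lemma gg1_cont: "\<nu> \<ge> 0 \<Longrightarrow> isCont (gg1 \<nu>) x"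
  using gg1_deriv DERIV_isCont by blast

lemma gg_meas: "\<nu> \<ge> 0 \<Longrightarrow> gg \<nu> \<in> borel_measurable borel"
  by (intro borel_measurable_continuous_onI continuous_at_imp_continuous_on ballI gg_cont)

lemma gg_abs: assumes "\<nu> \<ge> 0" "x \<ge> 0" shows "\<bar>gg \<nu> x\<bar> \<le> \<bar>bc \<nu> 0\<bar>"
proof -
  have "(gg \<nu> x)^2 \<le> (bc \<nu> 0)^2" using gg_bound[OF assms] by (smt (verit) zero_le_power2)
  thus ?thesis by (simp add: abs_le_square_iff)
qed

lemma gg1_abs: assumes "\<nu> \<ge> 0" "x \<ge> 0" shows "\<bar>gg1 \<nu> x\<bar> \<le> \<bar>bc \<nu> 0\<bar>"
proof -
  have "(gg1 \<nu> x)^2 \<le> (bc \<nu> 0)^2" using gg_bound[OF assms] by (smt (verit) zero_le_power2)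
  thus ?thesis by (simp add: abs_le_square_iff)
qed

lemma int_pe:
  fixes q c :: real
  assumes "q > -1" "c > 0"
  shows "set_integrable lborel {0<..} (\<lambda>x. x powr q * exp(-c*x))"
    and "(LINT x:{0<..}|lborel. x powr q * exp(-c*x)) = Gamma (q+1) / c powr (q+1)"
  using gamma_int[of "q+1" c] assms
  by (auto simp: set_integrable_def set_lebesgue_integral_def has_bochner_integral_iff)

lemma int_gg:
  fixes q c :: real
  assumes "\<nu> \<ge> 0" "q > -1" "c > 0"
  shows "set_integrable lborel {0<..} (\<lambda>x. x powr q * exp(-c*x) * gg \<nu> x)"
proof (rule set_integrable_bound)
  show "set_integrable lborel {0<..} (\<lambda>x. \<bar>bc \<nu> 0\<bar> * (x powr q * exp(-c*x)))"
    using int_pe(1)[OF assms(2,3)] by simp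
  have [measurable]: "gg \<nu> \<in> borel_measurable borel" by (rule gg_meas[OF assms(1)])
  show "set_borel_measurable lborel {0<..} (\<lambda>x. x powr q * exp(-c*x) * gg \<nu> x)"
    unfolding set_borel_measurable_def by measurable
  show "AE x in lborel. x \<in> {0<..} \<longrightarrow> norm (x powr q * exp(-c*x) * gg \<nu> x) \<le> norm (\<bar>bc \<nu> 0\<bar> * (x powr q * exp(-c*x)))"
  proof (rule AE_I2, rule impI)
    fix x :: real assume "x \<in> {0<..}"
    then show "norm (x powr q * exp(-c*x) * gg \<nu> x) \<le> norm (\<bar>bc \<nu> 0\<bar> * (x powr q * exp(-c*x)))"
      using gg_abs[OF assms(1), of x] by (simp add: abs_mult mult_left_mono mult.commute)
  qed
qed


lemma alg_id:
  fixes x G G1 G2 E P a c \<nu> :: real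
  assumes "x * G2 = -(2*\<nu>+1) * G1 - x * G"
  shows "-c * E * (P*x) * (x * G1 + (c*x - (a - 2*\<nu>)) * G) + E * (a * P) * (x * G1 + (c*x - (a - 2*\<nu>)) * G)
          + E * (P*x) * (G1 + x * G2 + c * G + (c*x - (a - 2*\<nu>)) * G1) =
  c*(2*a-2*\<nu>+1) * ((P*x) * E * G) - ((c^2+1) * ((P*x*x) * E * G) + a*(a-2*\<nu>) * (P * E * G))"
  using assms by algebra

lemma main_rec:
  assumes nu: "\<nu> \<ge> 0" and c: "c > 0" and a: "a > 0"
  defines "I \<equiv> \<lambda>q. LINT x:{0<..}|lborel. x powr q * exp(-c*x) * gg \<nu> x"
  shows "(c^2+1) * I (a+1) - c*(2*a-2*\<nu>+1) * I a + a*(a-2*\<nu>) * I (a-1) = 0"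
proof -
  define b where "b = a - 2*\<nu>"
  define K where "K x = x * gg1 \<nu> x + (c*x - b) * gg \<nu> x" for x
  define H where "H x = exp(-c*x) * x powr a * K x" for x
  define f1 where "f1 x = x powr (a+1) * exp(-c*x) * gg \<nu> x" for x
  define f2 where "f2 x = x powr a * exp(-c*x) * gg \<nu> x" for x
  define f3 where "f3 x = x powr (a-1) * exp(-c*x) * gg \<nu> x" for x
  define h where "h x = c*(2*a-2*\<nu>+1) * f2 x - ((c^2+1) * f1 x + a*(a-2*\<nu>) * f3 x)" for x
  have i1: "set_integrable lborel {0<..} f1" unfolding f1_def by (rule int_gg) (use nu a c in auto)
  have i2: "set_integrable lborel {0<..} f2" unfolding f2_def by (rule int_gg) (use nu a c in auto)
  have i3: "set_integrable lborel {0<..} f3" unfolding f3_def by (rule int_gg) (use nu a c in auto)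
  have ih: "set_integrable lborel {0<..} h"
    unfolding h_def using i1 i2 i3 by (intro set_integral_add set_integral_diff set_integrable_mult_right) auto
  have Ih: "(LINT x:{0<..}|lborel. h x) = - ((c^2+1) * I (a+1) - c*(2*a-2*\<nu>+1) * I a + a*(a-2*\<nu>) * I (a-1))"
  proof -
    have "(LINT x:{0<..}|lborel. h x) = c*(2*a-2*\<nu>+1) * (LINT x:{0<..}|lborel. f2 x) - ((c^2+1) * (LINT x:{0<..}|lborel. f1 x) + a*(a-2*\<nu>) * (LINT x:{0<..}|lborel. f3 x))"
      unfolding h_def using i1 i2 i3
      by (simp add: set_integral_add set_integral_diff set_integrable_mult_right)
    thus ?thesis by (simp add: I_def f1_def f2_def f3_def)
  qed
  have deriv: "(H has_real_derivative h x) (at x)" if x: "x > 0" for x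
  proof -
    have dK: "(K has_real_derivative (gg1 \<nu> x + x * gg2 \<nu> x + c * gg \<nu> x + (c*x - b) * gg1 \<nu> x)) (at x)"
      unfolding K_def[abs_def]
      by (auto intro!: derivative_eq_intros gg_deriv gg1_deriv nu simp: algebra_simps)
    have "(H has_real_derivative (-c * exp(-c*x) * x powr a * K x + exp(-c*x) * (a * x powr (a-1)) * K x
          + exp(-c*x) * x powr a * (gg1 \<nu> x + x * gg2 \<nu> x + c * gg \<nu> x + (c*x - b) * gg1 \<nu> x))) (at x)"
      unfolding H_def[abs_def] using x by (auto intro!: derivative_eq_intros dK simp: algebra_simps)
    moreover have "-c * exp(-c*x) * x powr a * K x + exp(-c*x) * (a * x powr (a-1)) * K x
          + exp(-c*x) * x powr a * (gg1 \<nu> x + x * gg2 \<nu> x + c * gg \<nu> x + (c*x - b) * gg1 \<nu> x) = h x"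
    proof -
      define P where "P = x powr (a-1)"
      have pa: "x powr a = P * x" using x unfolding P_def by (simp add: powr_diff)
      have pa1: "x powr (a+1) = P * x * x" using x pa by (simp add: powr_add)
      have ode: "x * gg2 \<nu> x = -(2*\<nu>+1) * gg1 \<nu> x - x * gg \<nu> x"
        using gg_ode[OF nu, of x] by linarith
      show ?thesis unfolding h_def f1_def f2_def f3_def pa pa1 K_def b_def P_def[symmetric]
        by (rule alg_id[OF ode])
    qed
    ultimately show ?thesis by simp
  qed
  have Kc: "isCont K x" for x unfolding K_def[abs_def]
    by (intro continuous_intros gg_cont gg1_cont nu)
  have lim0: "(H \<longlongrightarrow> 0) (at_right 0)"
  proof -
    have p: "((\<lambda>x. x powr a) \<longlongrightarrow> 0) (at_right 0)" using a by real_asymp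
    have k: "(K \<longlongrightarrow> K 0) (at_right 0)" using Kc[of 0] by (simp add: isCont_def filterlim_at_split)
    have "((\<lambda>x. exp(-c*x) * x powr a * K x) \<longlongrightarrow> exp(-c*0) * 0 * K 0) (at_right 0)"
      by (intro tendsto_intros p k)
    thus ?thesis by (simp add: H_def[abs_def])
  qed
  have limI: "(H \<longlongrightarrow> 0) at_top"
  proof (rule Lim_null_comparison)
    define M where "M = \<bar>bc \<nu> 0\<bar>"
    show "((\<lambda>x. M * exp(-c*x) * x powr a * ((1+c)*x + \<bar>b\<bar>)) \<longlongrightarrow> 0) at_top"
      using a c by real_asymp
    show "\<forall>\<^sub>F x in at_top. norm (H x) \<le> M * exp(-c*x) * x powr a * ((1+c)*x + \<bar>b\<bar>)"
    proof (rule eventually_at_top_linorderI[of 0])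
      fix x :: real assume x: "x \<ge> 0"
      have g0: "\<bar>gg \<nu> x\<bar> \<le> M" "\<bar>gg1 \<nu> x\<bar> \<le> M" using gg_abs[OF nu x] gg1_abs[OF nu x] by (simp_all add: M_def)
      have "\<bar>K x\<bar> \<le> \<bar>x * gg1 \<nu> x\<bar> + \<bar>(c*x - b) * gg \<nu> x\<bar>"
        unfolding K_def by (rule abs_triangle_ineq)
      also have "\<dots> = x * \<bar>gg1 \<nu> x\<bar> + \<bar>c*x - b\<bar> * \<bar>gg \<nu> x\<bar>"
        using x by (simp add: abs_mult)
      also have "\<dots> \<le> x * M + (c*x + \<bar>b\<bar>) * M"
      proof (rule add_mono)
        show "x * \<bar>gg1 \<nu> x\<bar> \<le> x * M" by (rule mult_left_mono[OF g0(2) x])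
        have cx: "c*x \<ge> 0" using x c by simp
        have cb: "\<bar>c*x - b\<bar> \<le> c*x + \<bar>b\<bar>" using cx abs_ge_self[of b] abs_ge_minus_self[of b]
          by (simp add: abs_le_iff)
        show "\<bar>c*x - b\<bar> * \<bar>gg \<nu> x\<bar> \<le> (c*x + \<bar>b\<bar>) * M"
          by (rule mult_mono[OF cb g0(1)]) (use cx in \<open>auto simp: M_def\<close>)
      qed
      finally have kb: "\<bar>K x\<bar> \<le> M * ((1+c)*x + \<bar>b\<bar>)" by (simp add: algebra_simps)
      have "norm (H x) = exp(-c*x) * x powr a * \<bar>K x\<bar>" unfolding H_def using x by (simp add: abs_mult)
      also have "\<dots> \<le> exp(-c*x) * x powr a * (M * ((1+c)*x + \<bar>b\<bar>))"
        by (intro mult_left_mono kb) auto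
      finally show "norm (H x) \<le> M * exp(-c*x) * x powr a * ((1+c)*x + \<bar>b\<bar>)" by (simp add: algebra_simps)
    qed
  qed
  have "(LBINT x=ereal 0..\<infinity>. h x) = 0 - 0"
  proof (rule interval_integral_FTC_integrable)
    show "ereal 0 < \<infinity>" by simp
    show "(H has_vector_derivative h x) (at x)" if "ereal 0 < ereal x" "ereal x < \<infinity>" for x
      using deriv[of x] that by (simp add: has_real_derivative_iff_has_vector_derivative)
    show "isCont h x" if "ereal 0 < ereal x" "ereal x < \<infinity>" for x
      using that unfolding h_def f1_def f2_def f3_def
      by (intro continuous_intros gg_cont nu) auto
    show "set_integrable lborel (einterval (ereal 0) \<infinity>) h" using ih by simp
    show "((H \<circ> real_of_ereal) \<longlongrightarrow> 0) (at_right (ereal 0))"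
      using lim0 by (simp add: ereal_tendsto_simps)
    show "((H \<circ> real_of_ereal) \<longlongrightarrow> 0) (at_left \<infinity>)"
      using limI by (simp add: ereal_tendsto_simps)
  qed
  hence "(LINT x:{0<..}|lborel. h x) = 0" by (simp add: interval_lebesgue_integral_def)
  thus ?thesis using Ih by simp
qed



theorem proposition3:
  fixes \<nu> \<alpha> c :: real
  assumes "\<nu> \<ge> 0" and "\<alpha> > -1" and "c > 0"
  defines "\<mu> \<equiv> \<lambda>k::nat. LINT x:{0<..}|lborel. x powr (real k + \<alpha>) * exp (- c * x) * (BesselJ \<nu> x + 1)"
      and "\<mu>\<^sub>0 \<equiv> \<lambda>k::nat. LINT x:{0<..}|lborel. x powr (real k + \<alpha>) * exp (- c * x) * BesselJ \<nu> x"
  shows "(\<forall>k::nat. k \<ge> 1 \<longrightarrow>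
            \<mu> (k + 1) = 1 / (c\<^sup>2 + 1) *
              (c * (2 * (real k + \<alpha>) + 1) * \<mu> k
               - ((real k + \<alpha>)\<^sup>2 - \<nu>\<^sup>2) * \<mu> (k - 1)
               + Gamma (real k + \<alpha>) * ((real k + \<alpha>)\<^sup>2 + (real k + \<alpha>) - c\<^sup>2 * \<nu>\<^sup>2)
                 / c powr (real k + \<alpha> + 2)))
         \<and> \<mu> 0 = \<mu>\<^sub>0 0 + Gamma (\<alpha> + 1) / c powr (\<alpha> + 1)
         \<and> \<mu> 1 = \<mu>\<^sub>0 1 + Gamma (\<alpha> + 2) / c powr (\<alpha> + 2)"
proof -
  note nu = assms(1) and al = assms(2) and c = assms(3)
  define C where "C = 2 powr (-\<nu>)"
  define I where "I q = (LINT x:{0<..}|lborel. x powr q * exp(-c*x) * gg \<nu> x)" for q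
  have eqJ: "x powr (real j + \<alpha>) * exp(-c*x) * BesselJ \<nu> x = C * (x powr (real j + \<alpha> + \<nu>) * exp(-c*x) * gg \<nu> x)"
    if "x > 0" for x j
    using that BesselJ_eq[OF nu, of x]
    by (simp add: C_def powr_add powr_divide powr_minus_divide field_simps)
  have intJ: "set_integrable lborel {0<..} (\<lambda>x. x powr (real j + \<alpha>) * exp(-c*x) * BesselJ \<nu> x)" for j
  proof -
    have "set_integrable lborel {0<..} (\<lambda>x. C * (x powr (real j + \<alpha> + \<nu>) * exp(-c*x) * gg \<nu> x))"
      using int_gg[OF nu _ c, of "real j + \<alpha> + \<nu>"] nu al by auto
    thus ?thesis using set_integrable_cong[of lborel lborel "{0<..}" "{0<..}"
        "\<lambda>x. x powr (real j + \<alpha>) * exp(-c*x) * BesselJ \<nu> x"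
        "\<lambda>x. C * (x powr (real j + \<alpha> + \<nu>) * exp(-c*x) * gg \<nu> x)"] eqJ by auto
  qed
  have m0: "\<mu>\<^sub>0 j = C * I (real j + \<alpha> + \<nu>)" for j
  proof -
    have "\<mu>\<^sub>0 j = (LINT x:{0<..}|lborel. C * (x powr (real j + \<alpha> + \<nu>) * exp(-c*x) * gg \<nu> x))"
      unfolding \<mu>\<^sub>0_def by (rule set_lebesgue_integral_cong) (use eqJ in auto)
    thus ?thesis by (simp add: I_def)
  qed
  have m: "\<mu> j = \<mu>\<^sub>0 j + Gamma (real j + \<alpha> + 1) / c powr (real j + \<alpha> + 1)" for j
  proof -
    have e: "(\<lambda>x. x powr (real j + \<alpha>) * exp (- c * x) * (BesselJ \<nu> x + 1)) =
          (\<lambda>x. x powr (real j + \<alpha>) * exp(-c*x) * BesselJ \<nu> x + x powr (real j + \<alpha>) * exp(-c*x))"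
      by (simp add: algebra_simps)
    have q: "real j + \<alpha> > -1" using al by simp
    show ?thesis unfolding \<mu>_def \<mu>\<^sub>0_def e
      using set_integral_add(2)[OF intJ[of j] int_pe(1)[OF q c]] int_pe(2)[OF q c] by simp
  qed
  have rec: "\<mu> (k + 1) = 1 / (c\<^sup>2 + 1) *
              (c * (2 * (real k + \<alpha>) + 1) * \<mu> k
               - ((real k + \<alpha>)\<^sup>2 - \<nu>\<^sup>2) * \<mu> (k - 1)
               + Gamma (real k + \<alpha>) * ((real k + \<alpha>)\<^sup>2 + (real k + \<alpha>) - c\<^sup>2 * \<nu>\<^sup>2)
                 / c powr (real k + \<alpha> + 2))" if k: "k \<ge> 1" for k
  proof -
    define t where "t = real k + \<alpha>"
    have t: "t > 0" using k al unfolding t_def by simp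
    define a where "a = t + \<nu>"
    have a: "a > 0" using t nu unfolding a_def by simp
    have R: "(c^2+1) * I (a+1) - c*(2*a-2*\<nu>+1) * I a + a*(a-2*\<nu>) * I (a-1) = 0"
      using main_rec[OF nu c a] by (simp add: I_def)
    have k1: "real (k - 1) = real k - 1" using k by simp
    have e1: "\<mu> (k+1) = C * I (a+1) + Gamma (t+2) / c powr (t+2)"
      using m[of "k+1"] m0[of "k+1"] by (simp add: a_def t_def add_ac)
    have e2: "\<mu> k = C * I a + Gamma (t+1) / c powr (t+1)"
      using m[of k] m0[of k] by (simp add: a_def t_def add_ac)
    have e3: "\<mu> (k-1) = C * I (a-1) + Gamma t / c powr t"
    proof -
      have ak: "real (k-1) + \<alpha> + \<nu> = a - 1" and tk: "real (k-1) + \<alpha> + 1 = t"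
        using k1 unfolding a_def t_def by simp_all
      show ?thesis using m[of "k-1"] m0[of "k-1"] unfolding ak tk by simp
    qed
    have g1: "Gamma (t+1) = t * Gamma t" using Gamma_step[OF t] .
    have g2: "Gamma (t+2) = (t+1) * t * Gamma t"
      using Gamma_step[of "t+1"] g1 t by (simp add: add_ac)
    have p1: "c powr (t+1) = c powr t * c" using c by (simp add: powr_add)
    have p2: "c powr (t+2) = c powr t * c^2" using c by (simp add: powr_add power2_eq_square)
    have pp: "c powr t > 0" using c by simp
    show ?thesis unfolding e1 e2 e3 t_def[symmetric] g1 g2 p1 p2
    proof -
      have "(c\<^sup>2 + 1) * (C * I (a + 1) + (t + 1) * t * Gamma t / (c powr t * c\<^sup>2)) =
            c * (2 * t + 1) * (C * I a + t * Gamma t / (c powr t * c)) -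
            (t\<^sup>2 - \<nu>\<^sup>2) * (C * I (a - 1) + Gamma t / c powr t) +
            Gamma t * (t\<^sup>2 + t - c\<^sup>2 * \<nu>\<^sup>2) / (c powr t * c\<^sup>2)"
      proof -
        have R': "(c^2+1) * I (a+1) = c*(2*t+1) * I a - (t^2-\<nu>^2) * I (a-1)"
          using R unfolding a_def by (simp add: algebra_simps power2_eq_square)
        have "(c\<^sup>2 + 1) * (C * I (a + 1)) = C * (c*(2*t+1) * I a - (t^2-\<nu>^2) * I (a-1))"
          using R' by simp
        moreover have "(c\<^sup>2 + 1) * ((t + 1) * t * Gamma t / (c powr t * c\<^sup>2)) =
            c * (2 * t + 1) * (t * Gamma t / (c powr t * c)) - (t\<^sup>2 - \<nu>\<^sup>2) * (Gamma t / c powr t) +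
            Gamma t * (t\<^sup>2 + t - c\<^sup>2 * \<nu>\<^sup>2) / (c powr t * c\<^sup>2)"
          using c pp by (simp add: field_simps power2_eq_square)
        ultimately show ?thesis by (simp add: algebra_simps)
      qed
      moreover have "c\<^sup>2 + 1 > 0" using zero_le_power2[of c] by linarith
      ultimately show "C * I (a + 1) + (t + 1) * t * Gamma t / (c powr t * c\<^sup>2) =
    1 / (c\<^sup>2 + 1) *
    (c * (2 * t + 1) * (C * I a + t * Gamma t / (c powr t * c)) -
     (t\<^sup>2 - \<nu>\<^sup>2) * (C * I (a - 1) + Gamma t / c powr t) +
     Gamma t * (t\<^sup>2 + t - c\<^sup>2 * \<nu>\<^sup>2) / (c powr t * c\<^sup>2))"
        by (simp add: field_simps)
    qed
  qed
  have z0: "\<mu> 0 = \<mu>\<^sub>0 0 + Gamma (\<alpha> + 1) / c powr (\<alpha> + 1)" using m[of 0] by simp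
  have z1: "\<mu> 1 = \<mu>\<^sub>0 1 + Gamma (\<alpha> + 2) / c powr (\<alpha> + 2)" using m[of 1] by (simp add: add_ac)
  show ?thesis using rec z0 z1 by blast
qed

end
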